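(* Every set $S\subset\mathbb{Z}_{>1}$ has a unique L-primitive subset $\langle S\rangle\subset S$ with $\mathrm{L}_{\langle S\rangle}=\mathrm{L}_S$. In particular $\langle S\rangle=S$ if $S$ is L-primitive.
   Context: For an integer $a>1$ with largest prime factor $P(a)$, $\mathrm{L}_a=\{ba: b\in\mathbb{N},\ \text{every prime } p\mid b \text{ satisfies } p\ge P(a)\}$, and for a set $T$, $\mathrm{L}_T=\bigcup_{a\in T}\mathrm{L}_a$. A set $A\subset\mathbb{Z}_{>1}$ is L-primitive if $a'\notin\mathrm{L}_a$ for all distinct $a,a'\in A$. *)

theory Defs
  imports "HOL-Computational_Algebra.Primes"
begin

definition gpf :: "nat \<Rightarrow> nat" where
  "gpf a = Max (prime_factors a)"

definition Lset :: "nat \<Rightarrow> nat set" where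
  "Lset a = {b * a | b. b \<ge> 1 \<and> (\<forall>p. prime p \<and> p dvd b \<longrightarrow> p \<ge> gpf a)}"

definition LsetT :: "nat set \<Rightarrow> nat set" where
  "LsetT T = (\<Union>a\<in>T. Lset a)"

definition L_primitive :: "nat set \<Rightarrow> bool" where
  "L_primitive A \<longleftrightarrow> A \<subseteq> {2..} \<and> (\<forall>a\<in>A. \<forall>a'\<in>A. a \<noteq> a' \<longrightarrow> a' \<notin> Lset a)"

end

theory Submission
  imports Defs
begin

lemma gpf_mono:
  assumes "(a::nat) \<ge> 2" "a dvd x" "x \<noteq> 0"
  shows "gpf a \<le> gpf x"
proof -
  have sub: "prime_factors a \<subseteq> prime_factors x"
    using assms by (simp add: dvd_prime_factors)
  have ne: "prime_factors a \<noteq> {}"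
  proof -
    obtain p where "prime p" "p dvd a" using assms(1) prime_factor_nat[of a] by auto
    then have "p \<in> prime_factors a" using assms(1) by (simp add: in_prime_factors_iff)
    then show ?thesis by blast
  qed
  show ?thesis unfolding gpf_def
    by (rule Max_mono[OF sub ne]) simp
qed

lemma Lset_dvd: "x \<in> Lset a \<Longrightarrow> a dvd x \<and> (a \<ge> 2 \<longrightarrow> a \<le> x)"
  unfolding Lset_def by auto

lemma Lset_self: "a \<in> Lset a"
  unfolding Lset_def by force

lemma Lset_trans:
  assumes "a \<ge> 2" "y \<in> Lset a" "x \<in> Lset y"
  shows "x \<in> Lset a"
proof -
  obtain b where b: "b \<ge> 1" "\<forall>p. prime p \<and> p dvd b \<longrightarrow> p \<ge> gpf a" "y = b * a"
    using assms(2) unfolding Lset_def by auto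
  obtain c where c: "c \<ge> 1" "\<forall>p. prime p \<and> p dvd c \<longrightarrow> p \<ge> gpf y" "x = c * y"
    using assms(3) unfolding Lset_def by auto
  have "gpf a \<le> gpf y" using gpf_mono[OF assms(1), of "b*a"] b assms(1) by simp
  then have "\<forall>p. prime p \<and> p dvd (c*b) \<longrightarrow> p \<ge> gpf a"
    using b c by (meson le_trans prime_dvd_mult_iff)
  moreover have "c * b \<ge> 1" using b c by simp
  moreover have "x = (c*b) * a" using b c by simp
  ultimately show ?thesis unfolding Lset_def by blast
qed

lemma Lset_antisym: "a \<ge> 2 \<Longrightarrow> x \<in> Lset a \<Longrightarrow> a \<in> Lset x \<Longrightarrow> a = x"
  using Lset_dvd by (meson dvd_antisym)

theorem lemma5p4:
  fixes S :: "nat set"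
  assumes "S \<subseteq> {2..}"
  shows "(\<exists>!T. T \<subseteq> S \<and> L_primitive T \<and> LsetT T = LsetT S)
         \<and> (L_primitive S \<longrightarrow> (THE T. T \<subseteq> S \<and> L_primitive T \<and> LsetT T = LsetT S) = S)"
proof -
  define M where "M = {a \<in> S. \<forall>a'\<in>S. a \<in> Lset a' \<longrightarrow> a' = a}"
  have S2: "\<And>s. s \<in> S \<Longrightarrow> s \<ge> 2" using assms by auto
  have down: "\<And>s. s \<in> S \<Longrightarrow> \<exists>t\<in>M. s \<in> Lset t"
  proof -
    fix s show "s \<in> S \<Longrightarrow> \<exists>t\<in>M. s \<in> Lset t"
    proof (induction s rule: less_induct)
      case (less s)
      show ?case
      proof (cases "s \<in> M")
        case True then show ?thesis using Lset_self by blast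
      next
        case False
        then obtain s' where s': "s' \<in> S" "s \<in> Lset s'" "s' \<noteq> s"
          using less.prems unfolding M_def by blast
        have "s' < s" using Lset_dvd[OF s'(2)] S2[OF s'(1)] s'(3) by simp
        then obtain t where "t \<in> M" "s' \<in> Lset t" using less.IH s'(1) by blast
        moreover have "t \<ge> 2" using \<open>t \<in> M\<close> S2 unfolding M_def by auto
        ultimately show ?thesis using Lset_trans s'(2) by blast
      qed
    qed
  qed
  have char: "\<And>T. (T \<subseteq> S \<and> L_primitive T \<and> LsetT T = LsetT S) \<longleftrightarrow> T = M"
  proof
    fix T assume T: "T \<subseteq> S \<and> L_primitive T \<and> LsetT T = LsetT S"
    show "T = M"
    proof
      show "M \<subseteq> T"
      proof
        fix a assume a: "a \<in> M"
        then have "a \<in> LsetT S" unfolding M_def LsetT_def using Lset_self by blast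
        then obtain t where "t \<in> T" "a \<in> Lset t" using T unfolding LsetT_def by blast
        then show "a \<in> T" using a T unfolding M_def by blast
      qed
    next
      show "T \<subseteq> M"
      proof
        fix a assume a: "a \<in> T"
        have "\<forall>a'\<in>S. a \<in> Lset a' \<longrightarrow> a' = a"
        proof (intro ballI impI)
          fix a' assume a': "a' \<in> S" "a \<in> Lset a'"
          then have "a' \<in> LsetT T" using T Lset_self unfolding LsetT_def by blast
          then obtain t where t: "t \<in> T" "a' \<in> Lset t" unfolding LsetT_def by blast
          have "t \<ge> 2" using t T S2 by blast
          then have "a \<in> Lset t" using Lset_trans t a' by blast
          then have "t = a" using T t a unfolding L_primitive_def by blast
          then show "a' = a" using Lset_antisym t a' S2 by metis
        qed
        then show "a \<in> M" using a T unfolding M_def by blast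
      qed
    qed
  next
    fix T assume "T = M"
    have prim: "L_primitive M"
      unfolding L_primitive_def M_def using assms by blast
    have "LsetT M = LsetT S"
    proof
      show "LsetT M \<subseteq> LsetT S" unfolding LsetT_def M_def by blast
    next
      show "LsetT S \<subseteq> LsetT M"
      proof
        fix x assume "x \<in> LsetT S"
        then obtain s where s: "s \<in> S" "x \<in> Lset s" unfolding LsetT_def by blast
        then obtain t where t: "t \<in> M" "s \<in> Lset t" using down by blast
        have "t \<ge> 2" using t S2 unfolding M_def by auto
        then have "x \<in> Lset t" using Lset_trans t s by blast
        then show "x \<in> LsetT M" using t unfolding LsetT_def by blast
      qed
    qed
    then show "T \<subseteq> S \<and> L_primitive T \<and> LsetT T = LsetT S"
      using \<open>T = M\<close> prim unfolding M_def by blast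
  qed
  have ex: "\<exists>!T. T \<subseteq> S \<and> L_primitive T \<and> LsetT T = LsetT S" unfolding char by blast
  have the: "(THE T. T \<subseteq> S \<and> L_primitive T \<and> LsetT T = LsetT S) = M" unfolding char by simp
  have "L_primitive S \<longrightarrow> M = S"
  proof
    assume "L_primitive S"
    then have "S \<subseteq> S \<and> L_primitive S \<and> LsetT S = LsetT S" by simp
    then show "M = S" using char by blast
  qed
  then show ?thesis using ex the by simp
qed

end
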